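(* Let $\Gamma$ be a countable group and let $\mathcal P\subseteq\mathrm{Sub}(\Gamma)$ be a nonempty $\Gamma$-invariant $G_\delta$ subset (hence Polish for the induced topology). Assume that $\mathcal{HT}(\Gamma)\cap\mathcal P$ is dense in $\mathcal P$ and that the conjugation action of $\Gamma$ on $\mathcal P$ is topologically transitive. Then the action of $\Gamma$ on $\mathcal P$ is highly topologically transitive.
   Context: $\mathrm{Sub}(\Gamma)$ is the set of subgroups of $\Gamma$ with the topology generated by the clopen sets $\{\Lambda:\mathcal I\subseteq\Lambda,\ \mathcal O\cap\Lambda=\emptyset\}$ with $\mathcal I,\mathcal O\subseteq\Gamma$ finite; $\Gamma$ acts on it by conjugation, $\Lambda\cdot\gamma=\gamma^{-1}\Lambda\gamma$. $\mathcal{HT}(\Gamma)$ is the set of infinite index subgroups $\Lambda$ such that the right-multiplication action $\Lambda\backslash\Gamma\curvearrowleft\Gamma$ is highly transitive (for all $d$, all pairwise distinct $x_1,..,x_d$ and pairwise distinct $y_1,..,y_d$ there is $\gamma$ with $x_i\gamma=y_i$). For an action by homeomorphisms on a Hausdorff space $X$: it is topologically transitive if for all nonempty open $U,V$ there is $\gamma$ with $U\gamma\cap V\ne\emptyset$; for $d\ge1$ it is $d$-topologically transitive if the diagonal action on $X^{(d)}=\{(x_1,\dots,x_d)\in X^d: x_i\neq x_j \text{ for } i\neq j\}$ (with the topology induced from $X^d$) is topologically transitive; if $X$ is infinite it is highly topologically transitive if it is $d$-topologically transitive for all $d\ge1$. *)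

theory Defs
  imports "HOL-Analysis.Analysis" "HOL-Algebra.Coset"
begin

definition Sub :: "('a, 'b) monoid_scheme \<Rightarrow> 'a set set" where
  "Sub G = {L. subgroup L G}"

definition sub_topology :: "('a, 'b) monoid_scheme \<Rightarrow> 'a set topology" where
  "sub_topology G = topology_generated_by
     {{L \<in> Sub G. I \<subseteq> L \<and> J \<inter> L = {}} | I J.
        finite I \<and> finite J \<and> I \<subseteq> carrier G \<and> J \<subseteq> carrier G}"

definition conj_act :: "('a, 'b) monoid_scheme \<Rightarrow> 'a \<Rightarrow> 'a set \<Rightarrow> 'a set" where
  "conj_act G g L = (\<lambda>h. inv\<^bsub>G\<^esub> g \<otimes>\<^bsub>G\<^esub> h \<otimes>\<^bsub>G\<^esub> g) ` L"

definition highly_transitive_cosets :: "('a, 'b) monoid_scheme \<Rightarrow> 'a set \<Rightarrow> bool" where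
  "highly_transitive_cosets G L \<longleftrightarrow>
     (\<forall>xs ys. length xs = length ys \<and> distinct xs \<and> distinct ys \<and>
        set xs \<subseteq> rcosets\<^bsub>G\<^esub> L \<and> set ys \<subseteq> rcosets\<^bsub>G\<^esub> L \<longrightarrow>
        (\<exists>g\<in>carrier G. map (\<lambda>X. X #>\<^bsub>G\<^esub> g) xs = ys))"

definition HT :: "('a, 'b) monoid_scheme \<Rightarrow> 'a set set" where
  "HT G = {L. subgroup L G \<and> infinite (rcosets\<^bsub>G\<^esub> L) \<and> highly_transitive_cosets G L}"

definition top_transitive :: "'x topology \<Rightarrow> 'g set \<Rightarrow> ('g \<Rightarrow> 'x \<Rightarrow> 'x) \<Rightarrow> bool" where
  "top_transitive X A act \<longleftrightarrow>
     (\<forall>U V. openin X U \<and> U \<noteq> {} \<and> openin X V \<and> V \<noteq> {} \<longrightarrow>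
        (\<exists>g\<in>A. act g ` U \<inter> V \<noteq> {}))"

definition distinct_tuples :: "'x topology \<Rightarrow> nat \<Rightarrow> (nat \<Rightarrow> 'x) topology" where
  "distinct_tuples X d = subtopology (product_topology (\<lambda>_. X) {..<d})
     {f. inj_on f {..<d}}"

definition diag_act :: "('g \<Rightarrow> 'x \<Rightarrow> 'x) \<Rightarrow> nat \<Rightarrow> 'g \<Rightarrow> (nat \<Rightarrow> 'x) \<Rightarrow> (nat \<Rightarrow> 'x)" where
  "diag_act act d g f = restrict (\<lambda>i. act g (f i)) {..<d}"

definition d_top_transitive :: "nat \<Rightarrow> 'x topology \<Rightarrow> 'g set \<Rightarrow> ('g \<Rightarrow> 'x \<Rightarrow> 'x) \<Rightarrow> bool" where
  "d_top_transitive d X A act \<longleftrightarrow> top_transitive (distinct_tuples X d) A (diag_act act d)"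

definition highly_top_transitive :: "'x topology \<Rightarrow> 'g set \<Rightarrow> ('g \<Rightarrow> 'x \<Rightarrow> 'x) \<Rightarrow> bool" where
  "highly_top_transitive X A act \<longleftrightarrow>
     infinite (topspace X) \<and> (\<forall>d\<ge>1. d_top_transitive d X A act)"

end

theory Submission
  imports Defs
begin
context group begin
lemma rcos_eq_iff:
  assumes "subgroup L G" "a \<in> carrier G" "b \<in> carrier G"
  shows "L #> a = L #> b \<longleftrightarrow> a \<otimes> inv b \<in> L"
proof
  assume "L #> a = L #> b"
  then have "a \<in> L #> b" using rcos_self assms by blast
  then show "a \<otimes> inv b \<in> L" using subgroup.rcos_module_imp[OF assms(1) is_group assms(3)] by blast
next
  assume "a \<otimes> inv b \<in> L"
  then have "a \<in> L #> b" using subgroup.rcos_module_rev[OF assms(1) is_group assms(3) assms(2)] by blast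
  then show "L #> a = L #> b" using repr_independence assms by metis
qed

lemma conj_mem_iff:
  assumes "L \<subseteq> carrier G" "g \<in> carrier G" "h \<in> carrier G"
  shows "h \<in> conj_act G g L \<longleftrightarrow> g \<otimes> h \<otimes> inv g \<in> L"
proof
  assume "h \<in> conj_act G g L"
  then obtain k where k: "k \<in> L" "h = inv g \<otimes> k \<otimes> g" unfolding conj_act_def by blast
  have "k \<in> carrier G" using k assms by blast
  then have "g \<otimes> h \<otimes> inv g = k" using k assms by (simp add: m_assoc[symmetric]; simp add: m_assoc)
  then show "g \<otimes> h \<otimes> inv g \<in> L" using k by simp
next
  assume "g \<otimes> h \<otimes> inv g \<in> L"
  moreover have "h = inv g \<otimes> (g \<otimes> h \<otimes> inv g) \<otimes> g" using assms by (simp add: m_assoc; simp add: m_assoc[symmetric])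
  ultimately show "h \<in> conj_act G g L" unfolding conj_act_def by blast
qed

lemma conj_comp:
  assumes "L \<subseteq> carrier G" "g \<in> carrier G" "a \<in> carrier G"
  shows "conj_act G g (conj_act G a L) = conj_act G (a \<otimes> g) L"
  unfolding conj_act_def image_image
proof (rule image_cong[OF refl])
  fix h assume "h \<in> L"
  then have "h \<in> carrier G" using assms by blast
  then show "inv g \<otimes> (inv a \<otimes> h \<otimes> a) \<otimes> g = inv (a \<otimes> g) \<otimes> h \<otimes> (a \<otimes> g)"
    using assms by (simp add: inv_mult_group m_assoc)
qed

lemma conj_self:
  assumes "subgroup L G" "l \<in> L"
  shows "conj_act G l L = L"
proof -
  have lc: "l \<in> carrier G" by (rule subgroup.mem_carrier[OF assms])
  have Lc: "L \<subseteq> carrier G" by (rule subgroup.subset[OF assms(1)])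
  show ?thesis
  proof (intro equalityI subsetI)
    fix h assume "h \<in> conj_act G l L"
    then obtain k where k: "k \<in> L" "h = inv l \<otimes> k \<otimes> l" unfolding conj_act_def by blast
    have il: "inv l \<in> L" by (rule subgroup.m_inv_closed[OF assms(1,2)])
    have "inv l \<otimes> k \<in> L" by (rule subgroup.m_closed[OF assms(1) il k(1)])
    then have "inv l \<otimes> k \<otimes> l \<in> L" by (rule subgroup.m_closed[OF assms(1) _ assms(2)])
    then show "h \<in> L" using k(2) by simp
  next
    fix h assume h: "h \<in> L"
    then have hc: "h \<in> carrier G" using Lc by blast
    have il: "inv l \<in> L" by (rule subgroup.m_inv_closed[OF assms(1,2)])
    have "l \<otimes> h \<in> L" by (rule subgroup.m_closed[OF assms(1) assms(2) h])
    then have "l \<otimes> h \<otimes> inv l \<in> L" by (rule subgroup.m_closed[OF assms(1) _ il])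
    then show "h \<in> conj_act G l L" using conj_mem_iff[OF Lc lc hc] by simp
  qed
qed

lemma rcos_conj:
  assumes "subgroup L G" "a \<in> carrier G" "b \<in> carrier G" "L #> a = L #> b"
  shows "conj_act G a L = conj_act G b L"
proof -
  have Lc: "L \<subseteq> carrier G" by (rule subgroup.subset[OF assms(1)])
  define l where "l = b \<otimes> inv a"
  have l: "l \<in> L" using rcos_eq_iff assms l_def by metis
  have lc: "l \<in> carrier G" using l Lc by blast
  have "b = l \<otimes> a" using assms by (simp add: l_def m_assoc)
  then have "conj_act G b L = conj_act G a (conj_act G l L)" using conj_comp[OF Lc assms(2) lc] by simp
  then show ?thesis using conj_self[OF assms(1) l] by simp
qed

lemma stab_conj:
  assumes "subgroup L G" "a \<in> carrier G" "g \<in> carrier G"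
  shows "L #> a #> g = L #> a \<longleftrightarrow> g \<in> conj_act G a L"
proof -
  have Lc: "L \<subseteq> carrier G" by (rule subgroup.subset[OF assms(1)])
  have "L #> a #> g = L #> (a \<otimes> g)" using coset_mult_assoc Lc assms by simp
  then have "L #> a #> g = L #> a \<longleftrightarrow> a \<otimes> g \<otimes> inv a \<in> L"
    using rcos_eq_iff assms by simp
  then show ?thesis using conj_mem_iff[OF Lc assms(2) assms(3)] by simp
qed
end

lemma topspace_sub: "topspace (sub_topology G) = Sub G"
  unfolding sub_topology_def topology_generated_by_topspace
proof (intro equalityI subsetI)
  fix L assume "L \<in> \<Union>{{L \<in> Sub G. I \<subseteq> L \<and> J \<inter> L = {}} | I J.
        finite I \<and> finite J \<and> I \<subseteq> carrier G \<and> J \<subseteq> carrier G}"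
  then show "L \<in> Sub G" by blast
next
  fix L assume "L \<in> Sub G"
  then have "L \<in> {L \<in> Sub G. {} \<subseteq> L \<and> {} \<inter> L = {}}" by simp
  then show "L \<in> \<Union>{{L \<in> Sub G. I \<subseteq> L \<and> J \<inter> L = {}} | I J.
        finite I \<and> finite J \<and> I \<subseteq> carrier G \<and> J \<subseteq> carrier G}" by blast
qed

lemma open_gen:
  assumes "finite I" "finite J" "I \<subseteq> carrier G" "J \<subseteq> carrier G"
  shows "openin (sub_topology G) {L \<in> Sub G. I \<subseteq> L \<and> J \<inter> L = {}}"
  unfolding sub_topology_def
  by (rule topology_generated_by_Basis) (use assms in blast)

lemma open_mem:
  assumes "h \<in> carrier G"
  shows "openin (sub_topology G) {L \<in> Sub G. h \<in> L}"
proof -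
  have "{L \<in> Sub G. h \<in> L} = {L \<in> Sub G. {h} \<subseteq> L \<and> {} \<inter> L = {}}" by auto
  then show ?thesis using open_gen[of "{h}" "{}" G] assms by simp
qed

lemma open_nmem:
  assumes "h \<in> carrier G"
  shows "openin (sub_topology G) {L \<in> Sub G. h \<notin> L}"
proof -
  have "{L \<in> Sub G. h \<notin> L} = {L \<in> Sub G. {} \<subseteq> L \<and> {h} \<inter> L = {}}" by auto
  then show ?thesis using open_gen[of "{}" "{h}" G] assms by simp
qed

lemma fin_dense:
  assumes "finite F"
    and "\<forall>B\<in>F. openin X B \<and> (\<forall>U. openin X U \<and> U \<noteq> {} \<longrightarrow> U \<inter> B \<noteq> {})"
  shows "\<forall>U. openin X U \<and> U \<noteq> {} \<longrightarrow> openin X (U \<inter> \<Inter>F) \<and> U \<inter> \<Inter>F \<noteq> {}"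
  using assms
proof (induction F rule: finite_induct)
  case empty
  then show ?case by simp
next
  case (insert B F)
  show ?case
  proof (intro allI impI)
    fix U assume U: "openin X U \<and> U \<noteq> {}"
    have o: "openin X B" "\<forall>U. openin X U \<and> U \<noteq> {} \<longrightarrow> U \<inter> B \<noteq> {}" using insert.prems by auto
    have "openin X (U \<inter> B) \<and> U \<inter> B \<noteq> {}" using U o by auto
    then have "openin X (U \<inter> B \<inter> \<Inter>F) \<and> U \<inter> B \<inter> \<Inter>F \<noteq> {}" using insert.IH insert.prems by blast
    then show "openin X (U \<inter> \<Inter>(insert B F)) \<and> U \<inter> \<Inter>(insert B F) \<noteq> {}"
      by (simp add: Int_assoc)
  qed
qed


definition sdpt :: "'a set \<Rightarrow> 'a set \<Rightarrow> 'a" where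
  "sdpt A B = (SOME h. h \<in> (A - B) \<union> (B - A))"

lemma sdpt_sym: "sdpt A B = sdpt B A"
  unfolding sdpt_def by (simp add: Un_commute)

lemma sdpt_in: "A \<noteq> B \<Longrightarrow> sdpt A B \<in> (A - B) \<union> (B - A)"
  unfolding sdpt_def by (rule someI_ex) blast

lemma sep_nbhd:
  assumes "P \<subseteq> Sub G"
    and U: "openin (distinct_tuples (subtopology (sub_topology G) P) d) \<U>" "x \<in> \<U>"
  shows "\<exists>U. (\<forall>i<d. openin (subtopology (sub_topology G) P) (U i) \<and> x i \<in> U i) \<and>
             (\<forall>i<d. \<forall>j<d. i \<noteq> j \<longrightarrow> U i \<inter> U j = {}) \<and>
             (\<forall>f\<in>extensional {..<d}. (\<forall>i<d. f i \<in> U i) \<longrightarrow> f \<in> \<U>)"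
proof -
  let ?X = "subtopology (sub_topology G) P"
  have tX: "topspace ?X = P" using assms(1) by (auto simp: topspace_sub)
  obtain W where W: "openin (product_topology (\<lambda>_. ?X) {..<d}) W" "\<U> = W \<inter> {f. inj_on f {..<d}}"
    using U(1) unfolding distinct_tuples_def openin_subtopology by blast
  have xW: "x \<in> W" and xinj: "inj_on x {..<d}" using U(2) W by auto
  obtain Y where Y: "x \<in> (\<Pi>\<^sub>E i\<in>{..<d}. Y i)" "\<And>i. openin ?X (Y i)" "(\<Pi>\<^sub>E i\<in>{..<d}. Y i) \<subseteq> W"
    using product_topology_open_contains_basis[OF W(1) xW] by blast
  have xP: "x i \<in> P" if "i < d" for i
  proof -
    have "x i \<in> Y i" using Y(1) that by (auto simp: PiE_iff)
    then show ?thesis using openin_subset[OF Y(2)[of i]] tX by blast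
  qed
  have xc: "x i \<subseteq> carrier G" if "i < d" for i
    using xP[OF that] assms(1) unfolding Sub_def by (auto dest: subgroup.subset)
  define S where "S i j = {L \<in> P. sdpt (x i) (x j) \<in> L \<longleftrightarrow> sdpt (x i) (x j) \<in> x i}" for i j
  have Sopen: "openin ?X (S i j)" if "i < d" "j < d" "i \<noteq> j" for i j
  proof -
    let ?h = "sdpt (x i) (x j)"
    have "x i \<noteq> x j" using xinj that by (auto simp: inj_on_def)
    then have "?h \<in> (x i - x j) \<union> (x j - x i)" by (rule sdpt_in)
    then have "?h \<in> carrier G" using xc[OF that(1)] xc[OF that(2)] by blast
    show ?thesis
    proof (cases "?h \<in> x i")
      case True
      then have "S i j = P \<inter> {L \<in> Sub G. ?h \<in> L}" using assms(1) unfolding S_def by auto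
      then show ?thesis using openin_subtopology_Int2[OF open_mem[OF \<open>?h \<in> carrier G\<close>], of P] by simp
    next
      case False
      then have "S i j = P \<inter> {L \<in> Sub G. ?h \<notin> L}" using assms(1) unfolding S_def by auto
      then show ?thesis using openin_subtopology_Int2[OF open_nmem[OF \<open>?h \<in> carrier G\<close>], of P] by simp
    qed
  qed
  define U where "U i = Y i \<inter> (\<Inter>j\<in>{..<d} - {i}. S i j) \<inter> topspace ?X" for i
  have Uopen: "openin ?X (U i)" if "i < d" for i
  proof -
    have "openin ?X ((\<Inter>j\<in>{..<d} - {i}. S i j) \<inter> topspace ?X)"
      by (rule openin_INT) (use Sopen that in auto)
    then have "openin ?X (Y i \<inter> ((\<Inter>j\<in>{..<d} - {i}. S i j) \<inter> topspace ?X))"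
      by (rule openin_Int[OF Y(2)])
    then show ?thesis unfolding U_def by (simp only: Int_assoc)
  qed
  have xU: "x i \<in> U i" if "i < d" for i
    using Y(1) that xP assms(1) unfolding U_def S_def by (auto simp: PiE_iff topspace_sub)
  have disj: "U i \<inter> U j = {}" if "i < d" "j < d" "i \<noteq> j" for i j
  proof (rule ccontr)
    assume "U i \<inter> U j \<noteq> {}"
    then obtain L where Li: "L \<in> U i" and Lj: "L \<in> U j" by blast
    have ji: "j \<in> {..<d} - {i}" and ij: "i \<in> {..<d} - {j}" using that by auto
    have "L \<in> (\<Inter>k\<in>{..<d} - {i}. S i k)" using Li unfolding U_def by blast
    then have L1: "L \<in> S i j" using ji by (rule INT_D)
    have "L \<in> (\<Inter>k\<in>{..<d} - {j}. S j k)" using Lj unfolding U_def by blast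
    then have L2: "L \<in> S j i" using ij by (rule INT_D)
    define h where "h = sdpt (x i) (x j)"
    have e1: "(h \<in> L) = (h \<in> x i)" using L1 unfolding S_def h_def by blast
    have e2: "(h \<in> L) = (h \<in> x j)" using L2 unfolding S_def h_def sdpt_sym[of "x j" "x i"] by blast
    have "x i \<noteq> x j" using xinj that by (auto simp: inj_on_def)
    then have "h \<in> (x i - x j) \<union> (x j - x i)" unfolding h_def by (rule sdpt_in)
    then show False using e1 e2 by blast
  qed
  have "\<forall>f\<in>extensional {..<d}. (\<forall>i<d. f i \<in> U i) \<longrightarrow> f \<in> \<U>"
  proof (intro ballI impI)
    fix f assume f: "f \<in> extensional {..<d}" "\<forall>i<d. f i \<in> U i"
    have "\<forall>i\<in>{..<d}. f i \<in> Y i" using f(2) unfolding U_def by blast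
    then have "f \<in> (\<Pi>\<^sub>E i\<in>{..<d}. Y i)" using f(1) by (simp add: PiE_iff)
    then have "f \<in> W" using Y(3) by blast
    moreover have "inj_on f {..<d}"
    proof (rule inj_onI)
      fix i j assume ij: "i \<in> {..<d}" "j \<in> {..<d}" "f i = f j"
      show "i = j"
      proof (rule ccontr)
        assume "i \<noteq> j"
        then have "U i \<inter> U j = {}" using disj ij by simp
        moreover have "f i \<in> U i" "f j \<in> U j" using f(2) ij by auto
        ultimately show False using ij(3) by auto
      qed
    qed
    ultimately show "f \<in> \<U>" using W(2) by blast
  qed
  then show ?thesis using Uopen xU disj by blast
qed


context group begin

lemma conj_cont:
  assumes "P \<subseteq> Sub G" "\<forall>g\<in>carrier G. \<forall>L\<in>P. conj_act G g L \<in> P" "g \<in> carrier G"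
  shows "continuous_map (subtopology (sub_topology G) P) (subtopology (sub_topology G) P) (conj_act G g)"
proof -
  let ?X = "subtopology (sub_topology G) P"
  have tX: "topspace ?X = P" using assms(1) by (auto simp: topspace_sub)
  let ?c = "\<lambda>h. g \<otimes> h \<otimes> inv g"
  have "continuous_map ?X (sub_topology G) (conj_act G g)"
    unfolding sub_topology_def
  proof (rule continuous_on_generated_topo)
    fix U assume "U \<in> {{L \<in> Sub G. I \<subseteq> L \<and> J \<inter> L = {}} | I J.
        finite I \<and> finite J \<and> I \<subseteq> carrier G \<and> J \<subseteq> carrier G}"
    then obtain I J where IJ: "finite I" "finite J" "I \<subseteq> carrier G" "J \<subseteq> carrier G"
      and U: "U = {L \<in> Sub G. I \<subseteq> L \<and> J \<inter> L = {}}" by blast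
    have eq: "conj_act G g -` U \<inter> topspace ?X = P \<inter> {L \<in> Sub G. ?c ` I \<subseteq> L \<and> ?c ` J \<inter> L = {}}"
    proof (intro equalityI subsetI)
      fix M assume M: "M \<in> conj_act G g -` U \<inter> topspace ?X"
      then have MP: "M \<in> P" using tX by blast
      then have Mc: "M \<subseteq> carrier G" using assms(1) unfolding Sub_def by (auto dest: subgroup.subset)
      have "?c ` I \<subseteq> M"
      proof
        fix y assume "y \<in> ?c ` I"
        then obtain h where h: "h \<in> I" "y = ?c h" by blast
        then have "h \<in> conj_act G g M" using M U by blast
        then show "y \<in> M" using conj_mem_iff[OF Mc assms(3)] h IJ by blast
      qed
      moreover have "?c ` J \<inter> M = {}"
      proof (rule ccontr)
        assume "?c ` J \<inter> M \<noteq> {}"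
        then obtain h where h: "h \<in> J" "?c h \<in> M" by blast
        then have "h \<in> conj_act G g M" using conj_mem_iff[OF Mc assms(3)] IJ by blast
        then show False using M U h by blast
      qed
      ultimately show "M \<in> P \<inter> {L \<in> Sub G. ?c ` I \<subseteq> L \<and> ?c ` J \<inter> L = {}}" using MP assms(1) by blast
    next
      fix M assume M: "M \<in> P \<inter> {L \<in> Sub G. ?c ` I \<subseteq> L \<and> ?c ` J \<inter> L = {}}"
      then have MP: "M \<in> P" by blast
      then have Mc: "M \<subseteq> carrier G" using assms(1) unfolding Sub_def by (auto dest: subgroup.subset)
      have cP: "conj_act G g M \<in> P" using assms(2,3) MP by blast
      have "I \<subseteq> conj_act G g M" using M conj_mem_iff[OF Mc assms(3)] IJ by blast
      moreover have "J \<inter> conj_act G g M = {}" using M conj_mem_iff[OF Mc assms(3)] IJ by blast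
      ultimately show "M \<in> conj_act G g -` U \<inter> topspace ?X" using cP assms(1) U tX MP by blast
    qed
    have "openin (sub_topology G) {L \<in> Sub G. ?c ` I \<subseteq> L \<and> ?c ` J \<inter> L = {}}"
      using IJ assms(3) by (intro open_gen) auto
    then have "openin ?X (P \<inter> {L \<in> Sub G. ?c ` I \<subseteq> L \<and> ?c ` J \<inter> L = {}})"
      by (rule openin_subtopology_Int2)
    then show "openin (subtopology (topology_generated_by {{L \<in> Sub G. I \<subseteq> L \<and> J \<inter> L = {}} |I J.
                finite I \<and> finite J \<and> I \<subseteq> carrier G \<and> J \<subseteq> carrier G}) P)
          (conj_act G g -` U \<inter> topspace (subtopology (topology_generated_by {{L \<in> Sub G. I \<subseteq> L \<and> J \<inter> L = {}} |I J.
                finite I \<and> finite J \<and> I \<subseteq> carrier G \<and> J \<subseteq> carrier G}) P))"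
      using eq unfolding sub_topology_def by simp
  next
    have "conj_act G g ` topspace ?X \<subseteq> Sub G" using tX assms(1,2,3) by blast
    then show "conj_act G g ` topspace (subtopology (topology_generated_by {{L \<in> Sub G. I \<subseteq> L \<and> J \<inter> L = {}} |I J.
                finite I \<and> finite J \<and> I \<subseteq> carrier G \<and> J \<subseteq> carrier G}) P)
    \<subseteq> \<Union> {{L \<in> Sub G. I \<subseteq> L \<and> J \<inter> L = {}} |I J. finite I \<and> finite J \<and> I \<subseteq> carrier G \<and> J \<subseteq> carrier G}"
      using topspace_sub[of G] unfolding sub_topology_def by simp
  qed
  then show ?thesis
    by (rule continuous_map_into_subtopology) (use tX assms(2,3) in auto)
qed


lemma HT_conj_inj:
  assumes "M \<in> HT G" "a \<in> carrier G" "b \<in> carrier G"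
    and eq: "conj_act G a M = conj_act G b M"
  shows "M #>\<^bsub>G\<^esub> a = M #>\<^bsub>G\<^esub> b"
proof (rule ccontr)
  assume ne: "M #> a \<noteq> M #> b"
  have sg: "subgroup M G" and inf: "infinite (rcosets M)" and ht: "highly_transitive_cosets G M"
    using assms(1) unfolding HT_def by auto
  have Mc: "M \<subseteq> carrier G" by (rule subgroup.subset[OF sg])
  have "infinite (rcosets M - {M #> a, M #> b})" using inf by simp
  then have "rcosets M - {M #> a, M #> b} \<noteq> {}" by (rule infinite_imp_nonempty)
  then obtain C where "C \<in> rcosets M - {M #> a, M #> b}" by (meson ex_in_conv)
  then have C: "C \<in> rcosets M" "C \<noteq> M #> a" "C \<noteq> M #> b" by simp_all
  have "length [M #> a, M #> b] = length [M #> a, C] \<and> distinct [M #> a, M #> b] \<and> distinct [M #> a, C] \<and>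
        set [M #> a, M #> b] \<subseteq> rcosets M \<and> set [M #> a, C] \<subseteq> rcosets M"
  proof -
    have "M #> a \<in> rcosets M" "M #> b \<in> rcosets M" using rcosetsI[OF Mc] assms(2,3) by auto
    then show ?thesis using ne C by simp
  qed
  then have ex: "\<exists>g\<in>carrier G. map (\<lambda>X. X #> g) [M #> a, M #> b] = [M #> a, C]"
    by (rule ht[unfolded highly_transitive_cosets_def, rule_format])
  obtain g where g: "g \<in> carrier G" "map (\<lambda>X. X #> g) [M #> a, M #> b] = [M #> a, C]"
    by (rule bexE[OF ex]) (rule that)
  then have g1: "M #> a #> g = M #> a" and g2: "M #> b #> g = C" by simp_all
  have "g \<in> conj_act G b M" using stab_conj[OF sg assms(2) g(1)] g1 eq by simp
  then have "M #> b #> g = M #> b" using stab_conj[OF sg assms(3) g(1)] by simp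
  then show False using g2 C by simp
qed

lemma HT_P_infinite:
  assumes "M \<in> HT G" "M \<in> P" "\<forall>g\<in>carrier G. \<forall>L\<in>P. conj_act G g L \<in> P"
  shows "infinite P"
proof
  assume fin: "finite P"
  have inf: "infinite (rcosets M)" using assms(1) unfolding HT_def by auto
  define rep where "rep R = (SOME a. a \<in> carrier G \<and> R = M #> a)" for R
  have rep: "rep R \<in> carrier G \<and> R = M #> rep R" if "R \<in> rcosets M" for R
  proof -
    have "\<exists>a. a \<in> carrier G \<and> R = M #> a" using that unfolding RCOSETS_def by blast
    then show ?thesis unfolding rep_def by (rule someI_ex)
  qed
  define F where "F R = conj_act G (rep R) M" for R
  have "inj_on F (rcosets M)"
  proof (rule inj_onI)
    fix R S assume R: "R \<in> rcosets M" and S: "S \<in> rcosets M" and FRS: "F R = F S"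
    from FRS have "conj_act G (rep R) M = conj_act G (rep S) M" unfolding F_def .
    then have "M #> rep R = M #> rep S"
      using HT_conj_inj[OF assms(1)] rep[OF R] rep[OF S] by blast
    then show "R = S" using rep[OF R] rep[OF S] by simp
  qed
  moreover have "F ` (rcosets M) \<subseteq> P"
  proof
    fix Y assume "Y \<in> F ` (rcosets M)"
    then obtain R where R: "R \<in> rcosets M" "Y = F R" by blast
    then show "Y \<in> P" using assms(2,3) rep[OF R(1)] unfolding F_def by blast
  qed
  ultimately have "finite (rcosets M)" using fin finite_imageD finite_subset by blast
  then show False using inf by simp
qed

lemma main_lemma:
  assumes "P \<subseteq> Sub G" and "P \<noteq> {}"
    and "\<forall>g\<in>carrier G. \<forall>L\<in>P. conj_act G g L \<in> P"
    and "(subtopology (sub_topology G) P) closure_of (HT G \<inter> P) = P"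
    and "top_transitive (subtopology (sub_topology G) P) (carrier G) (conj_act G)"
  shows "highly_top_transitive (subtopology (sub_topology G) P) (carrier G) (conj_act G)"
proof -
  define X where "X = subtopology (sub_topology G) P"
  have tX: "topspace X = P" using assms(1) by (auto simp: topspace_sub X_def)
  have denseHT: "U \<inter> (HT G \<inter> P) \<noteq> {}" if UU0: "openin X U" "U \<noteq> {}" for U
  proof -
    obtain x where x: "x \<in> U" using UU0 by blast
    then have "x \<in> X closure_of (HT G \<inter> P)" using assms(4) openin_subset[OF UU0(1)] tX
      unfolding X_def by auto
    then show ?thesis using x UU0(1) unfolding in_closure_of by blast
  qed
  have "P \<inter> (HT G \<inter> P) \<noteq> {}"
    by (rule denseHT) (use tX assms(2) openin_topspace[of X] in auto)
  then obtain M where M: "M \<in> HT G" "M \<in> P" by blast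
  have infP: "infinite P" using HT_P_infinite[OF M assms(3)] .
  have orb: "openin X {L \<in> P. \<exists>g\<in>carrier G. conj_act G g L \<in> V} \<and>
     (\<forall>U. openin X U \<and> U \<noteq> {} \<longrightarrow> U \<inter> {L \<in> P. \<exists>g\<in>carrier G. conj_act G g L \<in> V} \<noteq> {})"
    if V: "openin X V" "V \<noteq> {}" for V
  proof
    have "{L \<in> P. \<exists>g\<in>carrier G. conj_act G g L \<in> V} =
          (\<Union>g\<in>carrier G. {L \<in> topspace X. conj_act G g L \<in> V})" using tX by auto
    moreover have "openin X {L \<in> topspace X. conj_act G g L \<in> V}" if "g \<in> carrier G" for g
      using openin_continuous_map_preimage[OF conj_cont[OF assms(1,3) that] V(1)[unfolded X_def]]
      unfolding X_def .
    ultimately show "openin X {L \<in> P. \<exists>g\<in>carrier G. conj_act G g L \<in> V}" by auto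
  next
    show "\<forall>U. openin X U \<and> U \<noteq> {} \<longrightarrow> U \<inter> {L \<in> P. \<exists>g\<in>carrier G. conj_act G g L \<in> V} \<noteq> {}"
    proof (intro allI impI)
      fix U assume U: "openin X U \<and> U \<noteq> {}"
      have "\<exists>g\<in>carrier G. conj_act G g ` U \<inter> V \<noteq> {}"
        using U V by (intro assms(5)[unfolded top_transitive_def X_def[symmetric], rule_format]) simp
      then obtain g where g: "g \<in> carrier G" "conj_act G g ` U \<inter> V \<noteq> {}" by blast
      then obtain L where "L \<in> U" "conj_act G g L \<in> V" by blast
      moreover have "L \<in> P" using \<open>L \<in> U\<close> openin_subset U tX by blast
      ultimately show "U \<inter> {L \<in> P. \<exists>g\<in>carrier G. conj_act G g L \<in> V} \<noteq> {}" using g(1) by blast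
    qed
  qed
  have dtt: "d_top_transitive d X (carrier G) (conj_act G)" for d
    unfolding d_top_transitive_def top_transitive_def
  proof (intro allI impI, elim conjE)
    fix UU VV
    assume UU: "openin (distinct_tuples X d) UU" "UU \<noteq> {}"
       and VV: "openin (distinct_tuples X d) VV" "VV \<noteq> {}"
    obtain x where x: "x \<in> UU" using UU by blast
    obtain y where y: "y \<in> VV" using VV by blast
    obtain Ux where Ux: "\<forall>i<d. openin X (Ux i) \<and> x i \<in> Ux i"
         "\<forall>i<d. \<forall>j<d. i \<noteq> j \<longrightarrow> Ux i \<inter> Ux j = {}"
         "\<forall>f\<in>extensional {..<d}. (\<forall>i<d. f i \<in> Ux i) \<longrightarrow> f \<in> UU"
      using sep_nbhd[OF assms(1) UU(1)[unfolded X_def] x] unfolding X_def by blast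
    obtain Uy where Uy: "\<forall>i<d. openin X (Uy i) \<and> y i \<in> Uy i"
         "\<forall>i<d. \<forall>j<d. i \<noteq> j \<longrightarrow> Uy i \<inter> Uy j = {}"
         "\<forall>f\<in>extensional {..<d}. (\<forall>i<d. f i \<in> Uy i) \<longrightarrow> f \<in> VV"
      using sep_nbhd[OF assms(1) VV(1)[unfolded X_def] y] unfolding X_def by blast
    define Oo where "Oo i = {L \<in> P. \<exists>g\<in>carrier G. conj_act G g L \<in> Ux i}" for i
    define Q where "Q i = {L \<in> P. \<exists>g\<in>carrier G. conj_act G g L \<in> Uy i}" for i
    define F where "F = Oo ` {..<d} \<union> Q ` {..<d}"
    have OoP: "openin X (Oo i) \<and> (\<forall>U. openin X U \<and> U \<noteq> {} \<longrightarrow> U \<inter> Oo i \<noteq> {})" if "i < d" for i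
      unfolding Oo_def by (rule orb) (use Ux(1) that in auto)
    have QP: "openin X (Q i) \<and> (\<forall>U. openin X U \<and> U \<noteq> {} \<longrightarrow> U \<inter> Q i \<noteq> {})" if "i < d" for i
      unfolding Q_def by (rule orb) (use Uy(1) that in auto)
    have Fd: "\<forall>A\<in>F. openin X A \<and> (\<forall>U. openin X U \<and> U \<noteq> {} \<longrightarrow> U \<inter> A \<noteq> {})"
    proof
      fix A assume "A \<in> F"
      then obtain i where "i < d" "A = Oo i \<or> A = Q i" unfolding F_def by blast
      then show "openin X A \<and> (\<forall>U. openin X U \<and> U \<noteq> {} \<longrightarrow> U \<inter> A \<noteq> {})"
        using OoP QP by blast
    qed
    have Ff: "finite F" unfolding F_def by simp
    have top: "openin X (topspace X) \<and> topspace X \<noteq> {}" using tX assms(2) openin_topspace[of X] by simp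
    have "openin X (topspace X \<inter> \<Inter>F) \<and> topspace X \<inter> \<Inter>F \<noteq> {}"
      using fin_dense[OF Ff Fd, rule_format, OF top] .
    then have "openin X (P \<inter> \<Inter>F) \<and> P \<inter> \<Inter>F \<noteq> {}" using tX by simp
    then have "(P \<inter> \<Inter>F) \<inter> (HT G \<inter> P) \<noteq> {}" using denseHT by blast
    then obtain L where L: "L \<in> HT G" "L \<in> P" "L \<in> \<Inter>F" by blast
    have LO: "L \<in> Oo i" if "i < d" for i using L(3) that unfolding F_def by blast
    have LQ: "L \<in> Q i" if "i < d" for i using L(3) that unfolding F_def by blast
    have "\<forall>i. \<exists>a. i < d \<longrightarrow> a \<in> carrier G \<and> conj_act G a L \<in> Ux i"
      using LO unfolding Oo_def by blast
    then obtain a where a': "\<forall>i. i < d \<longrightarrow> a i \<in> carrier G \<and> conj_act G (a i) L \<in> Ux i"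
      by (rule choice[THEN exE])
    have a: "a i \<in> carrier G \<and> conj_act G (a i) L \<in> Ux i" if "i < d" for i using a' that by blast
    have "\<forall>i. \<exists>b. i < d \<longrightarrow> b \<in> carrier G \<and> conj_act G b L \<in> Uy i"
      using LQ unfolding Q_def by blast
    then obtain b where b': "\<forall>i. i < d \<longrightarrow> b i \<in> carrier G \<and> conj_act G (b i) L \<in> Uy i"
      by (rule choice[THEN exE])
    have b: "b i \<in> carrier G \<and> conj_act G (b i) L \<in> Uy i" if "i < d" for i using b' that by blast
    have sg: "subgroup L G" using L(1) unfolding HT_def by auto
    have Lc: "L \<subseteq> carrier G" by (rule subgroup.subset[OF sg])
    have ht: "highly_transitive_cosets G L" using L(1) unfolding HT_def by auto
    have injA: "inj_on (\<lambda>i. L #> a i) {..<d}"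
    proof (rule inj_onI)
      fix i j assume ij: "i \<in> {..<d}" "j \<in> {..<d}" "L #> a i = L #> a j"
      then have "conj_act G (a i) L = conj_act G (a j) L" using rcos_conj[OF sg] a by simp
      show "i = j"
      proof (rule ccontr)
        assume "i \<noteq> j"
        then have "Ux i \<inter> Ux j = {}" using Ux(2) ij by simp
        then show False using a[of i] a[of j] ij \<open>conj_act G (a i) L = conj_act G (a j) L\<close> by auto
      qed
    qed
    have injB: "inj_on (\<lambda>i. L #> b i) {..<d}"
    proof (rule inj_onI)
      fix i j assume ij: "i \<in> {..<d}" "j \<in> {..<d}" "L #> b i = L #> b j"
      then have "conj_act G (b i) L = conj_act G (b j) L" using rcos_conj[OF sg] b by simp
      show "i = j"
      proof (rule ccontr)
        assume "i \<noteq> j"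
        then have "Uy i \<inter> Uy j = {}" using Uy(2) ij by simp
        then show False using b[of i] b[of j] ij \<open>conj_act G (b i) L = conj_act G (b j) L\<close> by auto
      qed
    qed
    let ?xs = "map (\<lambda>i. L #> a i) [0..<d]"
    let ?ys = "map (\<lambda>i. L #> b i) [0..<d]"
    have "length ?xs = length ?ys \<and> distinct ?xs \<and> distinct ?ys \<and> set ?xs \<subseteq> rcosets L \<and> set ?ys \<subseteq> rcosets L"
      using injA injB a b rcosetsI[OF Lc] by (auto simp: distinct_map lessThan_atLeast0)
    then have ex: "\<exists>g\<in>carrier G. map (\<lambda>R. R #> g) ?xs = ?ys"
      by (rule ht[unfolded highly_transitive_cosets_def, rule_format])
    obtain g where g: "g \<in> carrier G" "map (\<lambda>R. R #> g) ?xs = ?ys"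
      by (rule bexE[OF ex]) (rule that)
    have gi: "conj_act G g (conj_act G (a i) L) \<in> Uy i" if "i < d" for i
    proof -
      have "L #> a i #> g = L #> b i" using g(2) that by (simp add: map_eq_conv)
      then have "L #> (a i \<otimes> g) = L #> b i" using coset_mult_assoc Lc a that g(1) by simp
      then have "conj_act G (a i \<otimes> g) L = conj_act G (b i) L"
        using rcos_conj[OF sg] a b g(1) that by simp
      then show ?thesis using conj_comp[OF Lc g(1)] a b that by simp
    qed
    define t where "t = restrict (\<lambda>i. conj_act G (a i) L) {..<d}"
    have "t \<in> extensional {..<d}" "\<forall>i<d. t i \<in> Ux i" using a unfolding t_def by auto
    then have tU: "t \<in> UU" using Ux(3) by blast
    have "diag_act (conj_act G) d g t \<in> extensional {..<d}"
         "\<forall>i<d. diag_act (conj_act G) d g t i \<in> Uy i"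
      using gi unfolding diag_act_def t_def by auto
    then have "diag_act (conj_act G) d g t \<in> VV" using Uy(3) by blast
    then show "\<exists>g\<in>carrier G. diag_act (conj_act G) d g ` UU \<inter> VV \<noteq> {}"
      using tU g(1) by blast
  qed
  show ?thesis
    unfolding highly_top_transitive_def using infP tX dtt unfolding X_def by simp
qed


end

theorem theoremD:
  fixes G :: "('a, 'b) monoid_scheme" and P :: "'a set set"
  assumes "group G"
    and "countable (carrier G)"
    and "P \<subseteq> Sub G" and "P \<noteq> {}"
    and "\<forall>g\<in>carrier G. \<forall>L\<in>P. conj_act G g L \<in> P"
    and "gdelta_in (sub_topology G) P"
    and "(subtopology (sub_topology G) P) closure_of (HT G \<inter> P) = P"
    and "top_transitive (subtopology (sub_topology G) P) (carrier G) (conj_act G)"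
  shows "highly_top_transitive (subtopology (sub_topology G) P) (carrier G) (conj_act G)"
  by (rule group.main_lemma[OF assms(1,3,4,5,7,8)])

end
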